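(* Let $\epsilon>0$. There exist constants $K,c>0$ depending only on $\epsilon$ such that for every $n$ and every $\epsilon$-balanced random digraph $\Gamma(n)$ on $[n]$, \[\mathbb{P}\big(\Gamma(n)\text{ is not strongly connected}\big)\le K e^{-cn}.\]
   Context: Digraphs may have multiple edges (and loops). $\deg(i,j)\in\mathbb{Z}_{\ge0}$ is the number of edges from $i$ to $j$. A digraph is strongly connected if there is a directed path from every vertex to every other vertex. A random variable $y$ in a ring $T$ is $\epsilon$-balanced if for every maximal ideal $\mathfrak p$ of $T$ and every $r\in T/\mathfrak p$, $\mathbb{P}(y\equiv r\bmod\mathfrak p)\le1-\epsilon$. A random digraph on $[n]$ is $\epsilon$-balanced if the $\deg(i,j)$ for ordered pairs $i\ne j$ are independent $\epsilon$-balanced random variables in $\mathbb{Z}$. *)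

theory Defs
  imports "HOL-Probability.Probability" "HOL-Computational_Algebra.Primes"
begin

definition off_diag :: "nat \<Rightarrow> (nat \<times> nat) set" where
  "off_diag n = {(i, j). i < n \<and> j < n \<and> i \<noteq> j}"

text \<open>A digraph on {0..<n} given by its edge multiplicities deg(i,j) (loops are
irrelevant for strong connectivity and are not recorded). There is an edge
i -> j iff deg(i,j) > 0.\<close>
definition edge_rel :: "nat \<Rightarrow> (nat \<times> nat \<Rightarrow> nat) \<Rightarrow> (nat \<times> nat) set" where
  "edge_rel n deg = {(i, j). (i, j) \<in> off_diag n \<and> deg (i, j) > 0}"

definition strongly_connected :: "nat \<Rightarrow> (nat \<times> nat \<Rightarrow> nat) \<Rightarrow> bool" where
  "strongly_connected n deg \<longleftrightarrow>
     (\<forall>i<n. \<forall>j<n. (i, j) \<in> (edge_rel n deg)\<^sup>*)"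

text \<open>A (nonnegative) integer random variable with law mu is eps-balanced: for every
maximal ideal pZ of Z (p prime) and every residue class r mod p,
P(y = r mod p) <= 1 - eps.\<close>
definition eps_balanced :: "real \<Rightarrow> nat pmf \<Rightarrow> bool" where
  "eps_balanced \<epsilon> \<mu> \<longleftrightarrow>
     (\<forall>p r :: int. prime p \<longrightarrow>
        measure_pmf.prob \<mu> {x. int x mod p = r mod p} \<le> 1 - \<epsilon>)"

definition random_digraph :: "nat \<Rightarrow> (nat \<Rightarrow> nat \<Rightarrow> nat pmf) \<Rightarrow> (nat \<times> nat \<Rightarrow> nat) pmf" where
  "random_digraph n \<mu> = Pi_pmf (off_diag n) 0 (\<lambda>(i, j). \<mu> i j)"

end

theory Submission
  imports Defs
begin


lemma cut_lemma:
  assumes "\<not> strongly_connected n d"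
  shows "\<exists>S. S \<subseteq> {0..<n} \<and> S \<noteq> {} \<and> S \<noteq> {0..<n} \<and>
     d \<in> Pi (off_diag n) (\<lambda>p. if fst p \<in> S \<and> snd p \<in> {0..<n} - S then {0} else UNIV)"
proof -
  obtain i j where ij: "i < n" "j < n" "(i, j) \<notin> (edge_rel n d)\<^sup>*"
    using assms unfolding strongly_connected_def by blast
  define S where "S = {k. k < n \<and> (i, k) \<in> (edge_rel n d)\<^sup>*}"
  have iS: "i \<in> S" using ij by (simp add: S_def)
  have jS: "j \<notin> S" using ij by (simp add: S_def)
  have Ssub: "S \<subseteq> {0..<n}" by (auto simp: S_def)
  have Sne: "S \<noteq> {}" using iS by blast
  have Sn: "S \<noteq> {0..<n}" using jS ij(2) by auto
  have dPi: "d \<in> Pi (off_diag n) (\<lambda>p. if fst p \<in> S \<and> snd p \<in> {0..<n} - S then {0} else UNIV)"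
  proof (rule Pi_I)
    fix p assume p: "p \<in> off_diag n"
    obtain a b where pab: "p = (a, b)" by (cases p)
    show "d p \<in> (if fst p \<in> S \<and> snd p \<in> {0..<n} - S then {0} else UNIV)"
    proof (cases "a \<in> S \<and> b \<in> {0..<n} - S")
      case True
      have "d (a, b) = 0"
      proof (rule ccontr)
        assume "d (a, b) \<noteq> 0"
        then have ab: "(a, b) \<in> edge_rel n d" using p pab by (simp add: edge_rel_def)
        have ia: "(i, a) \<in> (edge_rel n d)\<^sup>*" using True by (simp add: S_def)
        have "(i, b) \<in> (edge_rel n d)\<^sup>*" by (rule rtrancl_into_rtrancl[OF ia ab])
        then show False using True by (simp add: S_def)
      qed
      then show ?thesis using pab True by simp
    next
      case False then show ?thesis by (auto simp: pab)
    qed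
  qed
  show ?thesis using Ssub Sne Sn dPi by blast
qed

lemma bal_zero:
  assumes "eps_balanced \<epsilon> \<mu>"
  shows "measure_pmf.prob \<mu> {0} \<le> 1 - \<epsilon>"
proof -
  have "measure_pmf.prob \<mu> {0} \<le> measure_pmf.prob \<mu> {x. int x mod 2 = 0 mod 2}"
    by (rule measure_pmf.finite_measure_mono) auto
  also have "\<dots> \<le> 1 - \<epsilon>"
  proof -
    have h2: "prime (2::int)" by simp
    show ?thesis using assms h2 unfolding eps_balanced_def by blast
  qed
  finally show ?thesis .
qed

lemma bal_half:
  assumes "eps_balanced \<epsilon> \<mu>"
  shows "\<epsilon> \<le> 1/2"
proof -
  let ?A = "{x. int x mod 2 = 0 mod 2}"
  have h2: "prime (2::int)" by simp
  have a: "measure_pmf.prob \<mu> ?A \<le> 1 - \<epsilon>" using assms h2 unfolding eps_balanced_def by blast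
  have b: "measure_pmf.prob \<mu> {x. int x mod 2 = 1 mod 2} \<le> 1 - \<epsilon>"
    using assms h2 unfolding eps_balanced_def by blast
  have "UNIV - ?A = {x. int x mod 2 = 1 mod 2}" by auto
  then have "measure_pmf.prob \<mu> {x. int x mod 2 = 1 mod 2} = 1 - measure_pmf.prob \<mu> ?A"
    using measure_pmf.prob_compl[of ?A \<mu>] by simp
  then show ?thesis using a b by linarith
qed



lemma prob_cut:
  assumes bal: "\<forall>(i, j)\<in>off_diag n. eps_balanced \<epsilon> (\<mu> i j)"
    and q: "0 \<le> 1 - \<epsilon>" and S: "S \<subseteq> {0..<n}"
  shows "measure_pmf.prob (random_digraph n \<mu>)
     (Pi (off_diag n) (\<lambda>p. if fst p \<in> S \<and> snd p \<in> {0..<n} - S then {0} else UNIV))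
     \<le> (1 - \<epsilon>) ^ (card S * (n - card S))"
proof -
  have fin: "finite (off_diag n)"
    by (rule finite_subset[of _ "{0..<n} \<times> {0..<n}"]) (auto simp: off_diag_def)
  let ?C = "S \<times> ({0..<n} - S)"
  have C: "?C \<subseteq> off_diag n" using S by (auto simp: off_diag_def)
  have "measure_pmf.prob (random_digraph n \<mu>)
     (Pi (off_diag n) (\<lambda>p. if fst p \<in> S \<and> snd p \<in> {0..<n} - S then {0} else UNIV))
     = (\<Prod>p\<in>off_diag n. measure_pmf.prob ((\<lambda>(i, j). \<mu> i j) p)
          (if fst p \<in> S \<and> snd p \<in> {0..<n} - S then {0} else UNIV))"
    unfolding random_digraph_def by (rule measure_Pi_pmf_Pi[OF fin])
  also have "\<dots> \<le> (\<Prod>p\<in>off_diag n. if p \<in> ?C then 1 - \<epsilon> else 1)"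
  proof (rule prod_mono)
    fix p assume p: "p \<in> off_diag n"
    obtain a b where pab: "p = (a, b)" by (cases p)
    have "eps_balanced \<epsilon> (\<mu> a b)" using bal p pab by auto
    then have "measure_pmf.prob (\<mu> a b) {0} \<le> 1 - \<epsilon>" by (rule bal_zero)
    then show "0 \<le> measure_pmf.prob ((\<lambda>(i, j). \<mu> i j) p)
          (if fst p \<in> S \<and> snd p \<in> {0..<n} - S then {0} else UNIV) \<and>
        measure_pmf.prob ((\<lambda>(i, j). \<mu> i j) p)
          (if fst p \<in> S \<and> snd p \<in> {0..<n} - S then {0} else UNIV)
        \<le> (if p \<in> ?C then 1 - \<epsilon> else 1)"
      by (auto simp: pab)
  qed
  also have "\<dots> = (\<Prod>p\<in>?C. 1 - \<epsilon>)"
  proof -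
    have "{p \<in> off_diag n. p \<in> ?C} = ?C" using C by blast
    then show ?thesis
      using prod.inter_filter[OF fin, of "\<lambda>_. 1 - \<epsilon>" "\<lambda>p. p \<in> ?C"] by simp
  qed
  also have "\<dots> = (1 - \<epsilon>) ^ (card S * (n - card S))"
  proof -
    have "finite S" using S finite_subset by blast
    then have "card ?C = card S * (n - card S)" using S
      by (simp add: card_cartesian_product card_Diff_subset)
    then show ?thesis by simp
  qed
  finally show ?thesis .
qed



lemma term_aux:
  fixes r :: real
  assumes r: "0 \<le> r" "r \<le> 1" and x: "real n * r ^ n \<le> 1"
    and k: "1 \<le> k" "k \<le> n - k"
  shows "real (n choose k) * r ^ (2 * k * (n - k)) \<le> real n * r ^ n"
proof -
  have "k * n \<le> 2 * k * (n - k)"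
  proof -
    have "n \<le> 2 * (n - k)" using k by linarith
    then have "k * n \<le> k * (2 * (n - k))" by (rule mult_le_mono2)
    then show ?thesis by (simp add: mult_ac)
  qed
  then have "r ^ (2 * k * (n - k)) \<le> r ^ (k * n)" by (rule power_decreasing[OF _ r])
  also have "\<dots> = r ^ (n * k)" by (simp add: mult.commute)
  also have "\<dots> = (r ^ n) ^ k" by (rule power_mult)
  finally have a: "r ^ (2 * k * (n - k)) \<le> (r ^ n) ^ k" .
  have b: "real (n choose k) \<le> real n ^ k"
  proof -
    have "k \<le> n" using k by linarith
    then have "n choose k \<le> n ^ k" by (rule binomial_le_pow)
    then have "real (n choose k) \<le> real (n ^ k)" by (simp only: of_nat_le_iff)
    then show ?thesis by simp
  qed
  have "real (n choose k) * r ^ (2 * k * (n - k)) \<le> real n ^ k * (r ^ n) ^ k"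
    by (rule mult_mono[OF b a]) (use r in auto)
  also have "\<dots> = (real n * r ^ n) ^ k" by (simp add: power_mult_distrib)
  also have "\<dots> \<le> (real n * r ^ n) ^ 1"
    by (rule power_decreasing[OF k(1)]) (use r x in auto)
  finally show ?thesis by simp
qed

lemma term_bound:
  fixes r :: real
  assumes r: "0 \<le> r" "r \<le> 1" and x: "real n * r ^ n \<le> 1"
    and k: "1 \<le> k" "k \<le> n - 1"
  shows "real (n choose k) * r ^ (2 * k * (n - k)) \<le> real n * r ^ n"
proof (cases "k \<le> n - k")
  case True then show ?thesis by (rule term_aux[OF r x k(1)])
next
  case False
  define k' where "k' = n - k"
  have k': "1 \<le> k'" "k' \<le> n - k'" "n - k' = k" using k False by (auto simp: k'_def)
  have kn: "k \<le> n" using k by linarith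
  have e1: "n choose k = n choose k'" unfolding k'_def by (rule binomial_symmetric[OF kn])
  have e2: "2 * k * (n - k) = 2 * k' * (n - k')" using k' by (simp add: k'_def mult_ac)
  show ?thesis unfolding e1 e2 by (rule term_aux[OF r x k'(1,2)])
qed

lemma sum_bound:
  fixes r :: real
  assumes r: "0 \<le> r" "r \<le> 1" and x: "real n * r ^ n \<le> 1"
  shows "(\<Sum>S\<in>{S. S \<subseteq> {0..<n} \<and> S \<noteq> {} \<and> S \<noteq> {0..<n}}. r ^ (2 * (card S * (n - card S))))
     \<le> real n ^ 2 * r ^ n"
proof -
  let ?F = "{S. S \<subseteq> {0..<n} \<and> S \<noteq> {} \<and> S \<noteq> {0..<n}}"
  have finF: "finite ?F" by (rule finite_subset[of _ "Pow {0..<n}"]) auto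
  have img: "card ` ?F \<subseteq> {1..n-1}"
  proof
    fix m assume "m \<in> card ` ?F"
    then obtain S where S: "S \<in> ?F" "m = card S" by blast
    have fS: "finite S" using S finite_subset by blast
    have "card S \<noteq> 0" using S fS by auto
    moreover have "card S < n"
      using S psubset_card_mono[of "{0..<n}" S] by auto
    ultimately show "m \<in> {1..n-1}" using S by auto
  qed
  have "(\<Sum>S\<in>?F. r ^ (2 * (card S * (n - card S))))
      = (\<Sum>k\<in>{1..n-1}. \<Sum>S\<in>{S\<in>?F. card S = k}. r ^ (2 * (card S * (n - card S))))"
    by (rule sum.group[OF finF _ img, symmetric]) simp
  also have "\<dots> = (\<Sum>k\<in>{1..n-1}. real (n choose k) * r ^ (2 * k * (n - k)))"
  proof (rule sum.cong[OF refl])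
    fix k assume k: "k \<in> {1..n-1}"
    have eq: "{S\<in>?F. card S = k} = {S. S \<subseteq> {0..<n} \<and> card S = k}"
      using k by auto
    have "card {S. S \<subseteq> {0..<n} \<and> card S = k} = n choose k"
      using n_subsets[of "{0..<n}" k] by simp
    then show "(\<Sum>S\<in>{S\<in>?F. card S = k}. r ^ (2 * (card S * (n - card S))))
        = real (n choose k) * r ^ (2 * k * (n - k))"
      using eq by (simp add: mult.assoc)
  qed
  also have "\<dots> \<le> (\<Sum>k\<in>{1..n-1}. real n * r ^ n)"
    by (rule sum_mono) (use term_bound[OF r x] in auto)
  also have "\<dots> \<le> real n ^ 2 * r ^ n"
  proof -
    have "real (n - 1) \<le> real n" by simp
    then have "real (n - 1) * (real n * r ^ n) \<le> real n * (real n * r ^ n)"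
      by (rule mult_right_mono) (use r in simp)
    then show ?thesis by (simp add: power2_eq_square mult.assoc)
  qed
  finally show ?thesis .
qed



lemma final_ineq:
  fixes c :: real assumes c: "c > 0"
  shows "real n ^ 2 * exp (- 2 * c * real n) \<le> 4 / c^2 * exp (- c * real n)"
proof -
  have y: "c * real n / 2 \<le> exp (c * real n / 2)"
    using exp_ge_add_one_self[of "c * real n / 2"] by linarith
  have "(c * real n / 2)^2 \<le> exp (c * real n / 2) ^ 2"
    by (rule power_mono[OF y]) (use c in simp)
  also have "\<dots> = exp (c * real n / 2 + c * real n / 2)" by (simp only: power2_eq_square exp_add)
  also have "\<dots> = exp (c * real n)" by simp
  finally have h: "c^2 * real n ^ 2 \<le> 4 * exp (c * real n)" by (simp add: power_mult_distrib power2_eq_square algebra_simps)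
  have e: "exp (- 2 * c * real n) = exp (- c * real n) * exp (- c * real n)"
  proof -
    have "- 2 * c * real n = (- c * real n) + (- c * real n)" by simp
    then show ?thesis by (simp only: exp_add)
  qed
  have "c^2 * (real n ^ 2 * exp (- 2 * c * real n)) = (c^2 * real n ^ 2 * exp (- c * real n)) * exp (- c * real n)"
    unfolding e by (simp only: mult_ac)
  also have "\<dots> \<le> (4 * exp (c * real n) * exp (- c * real n)) * exp (- c * real n)"
    by (intro mult_right_mono h) auto
  also have "\<dots> = 4 * exp (- c * real n)"
    using exp_minus_inverse[of "c * real n"] by simp
  finally have "c^2 * (real n ^ 2 * exp (- 2 * c * real n)) \<le> 4 * exp (- c * real n)" .
  then show ?thesis using c by (simp add: field_simps)
qed

theorem mainTheorem8:
  fixes \<epsilon> :: real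
  assumes "\<epsilon> > 0"
  shows "\<exists>K c. K > 0 \<and> c > 0 \<and>
    (\<forall>n \<mu>. (\<forall>(i, j)\<in>off_diag n. eps_balanced \<epsilon> (\<mu> i j)) \<longrightarrow>
       measure_pmf.prob (random_digraph n \<mu>) {d. \<not> strongly_connected n d}
         \<le> K * exp (- c * real n))"
proof -
  define r where "r = sqrt (1 - min \<epsilon> (1/2))"
  have r0: "0 < r" and r1: "r < 1" using assms by (auto simp: r_def)
  define c where "c = - ln r / 2"
  have c: "c > 0" using r0 r1 by (simp add: c_def)
  define K where "K = 4 / c^2"
  have K: "K > 0" using c by (simp add: K_def)
  have rn: "r ^ n = exp (- 2 * c * real n)" for n
    proof -
    have "r ^ n = exp (ln r) ^ n" using r0 by simp
    also have "\<dots> = exp (real n * ln r)" by (simp add: exp_of_nat_mult)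
    finally show ?thesis by (simp add: c_def mult.commute)
  qed
  show ?thesis
  proof (intro exI conjI allI impI)
    show "K > 0" "c > 0" using K c by auto
    fix n \<mu> assume bal: "\<forall>(i, j)\<in>off_diag n. eps_balanced \<epsilon> (\<mu> i j)"
    show "measure_pmf.prob (random_digraph n \<mu>) {d. \<not> strongly_connected n d}
         \<le> K * exp (- c * real n)"
    proof (cases "n \<le> 1")
      case True
      have "{d. \<not> strongly_connected n d} = {}"
      proof -
        have "strongly_connected n d" for d
          unfolding strongly_connected_def
        proof (intro allI impI)
          fix i j assume "i < n" "j < n"
          then have "i = j" using True by linarith
          then show "(i, j) \<in> (edge_rel n d)\<^sup>*" by simp
        qed
        then show ?thesis by simp
      qed
      then show ?thesis using K by simp
    next
      case False
      have n2: "2 \<le> n" using False by simp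
      have "(0, 1) \<in> off_diag n" using False by (auto simp: off_diag_def)
      then have "eps_balanced \<epsilon> (\<mu> 0 1)" using bal by auto
      then have e2: "\<epsilon> \<le> 1/2" by (rule bal_half)
      then have q: "1 - \<epsilon> = r ^ 2" using assms by (simp add: r_def)
      let ?F = "{S. S \<subseteq> {0..<n} \<and> S \<noteq> {} \<and> S \<noteq> {0..<n}}"
      let ?E = "\<lambda>S. Pi (off_diag n) (\<lambda>p. if fst p \<in> S \<and> snd p \<in> {0..<n} - S then {0} else UNIV)"
      have finF: "finite ?F" by (rule finite_subset[of _ "Pow {0..<n}"]) auto
      have "measure_pmf.prob (random_digraph n \<mu>) {d. \<not> strongly_connected n d}
          \<le> measure_pmf.prob (random_digraph n \<mu>) (\<Union>S\<in>?F. ?E S)"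
      proof (rule measure_pmf.finite_measure_mono)
        show "{d. \<not> strongly_connected n d} \<subseteq> (\<Union>S\<in>?F. ?E S)"
        proof
          fix d assume "d \<in> {d. \<not> strongly_connected n d}"
          then have "\<not> strongly_connected n d" by simp
          from cut_lemma[OF this] obtain S where "S \<in> ?F" "d \<in> ?E S" by blast
          then show "d \<in> (\<Union>S\<in>?F. ?E S)" by blast
        qed
      qed simp
      also have "\<dots> \<le> (\<Sum>S\<in>?F. measure_pmf.prob (random_digraph n \<mu>) (?E S))"
        by (rule measure_pmf.finite_measure_subadditive_finite[OF finF]) auto
      also have "\<dots> \<le> (\<Sum>S\<in>?F. r ^ (2 * (card S * (n - card S))))"
      proof (rule sum_mono)
        fix S assume "S \<in> ?F"
        then have Ssub: "S \<subseteq> {0..<n}" by blast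
        have qq: "0 \<le> 1 - \<epsilon>" using e2 by simp
        have "measure_pmf.prob (random_digraph n \<mu>) (?E S) \<le> (1 - \<epsilon>) ^ (card S * (n - card S))"
          by (rule prob_cut[OF bal qq Ssub])
        then show "measure_pmf.prob (random_digraph n \<mu>) (?E S) \<le> r ^ (2 * (card S * (n - card S)))"
          by (simp add: q power_mult)
      qed
      finally have P: "measure_pmf.prob (random_digraph n \<mu>) {d. \<not> strongly_connected n d}
          \<le> (\<Sum>S\<in>?F. r ^ (2 * (card S * (n - card S))))" .
      have "measure_pmf.prob (random_digraph n \<mu>) {d. \<not> strongly_connected n d} \<le> real n ^ 2 * r ^ n"
      proof (cases "real n * r ^ n \<le> 1")
        case True
        then show ?thesis using P sum_bound[of r n] r0 r1 by linarith
      next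
        case False
        have n1: "1 \<le> real n" using n2 by simp
        have "1 * (real n * r ^ n) \<le> real n * (real n * r ^ n)"
          by (rule mult_right_mono[OF n1]) (use r0 in simp)
        then have "1 \<le> real n ^ 2 * r ^ n" using False by (simp only: power2_eq_square mult.assoc mult_1)
        then show ?thesis using measure_pmf.prob_le_1[of "random_digraph n \<mu>"] by (meson order_trans)
      qed
      also have "\<dots> \<le> K * exp (- c * real n)"
        unfolding rn K_def by (rule final_ineq[OF c])
      finally show ?thesis .
    qed
  qed
qed


end
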